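(* Let $n\ge1$ and let $F:\mathbb{F}_{2^n}\to\mathbb{F}_{2^n}$ be any function. Then $$2^n\sum_{v_1,v_2\in \mathbb{F}_{2^n}}\ \sum_{\substack{(x_1,x_2,x_3)\in \mathbb{F}_{2^n}^3\\ v_1x_1+v_2x_2+(v_1+v_2)x_3=0}} (-1)^{tr_n(v_1F(x_1)+v_2F(x_2)+(v_1+v_2)F(x_3))}\;-\;\sum_{v_1,v_2\in \mathbb{F}_{2^n}}W_F(0,v_1)W_F(0,v_2)W_F(0,v_1+v_2)$$ $$+\;2^{n+2}\sum_{v\in \mathbb{F}_{2^n}^*}W_F^2(0,v)\;-\;2^{4n+2}\;+\;2^{3n+2}\;\ge\;0,$$ and equality holds if and only if $F$ is an o-polynomial.
   Context: For a positive integer $n$, $tr_n:\mathbb{F}_{2^n}\to\mathbb{F}_2$ denotes the absolute trace $tr_n(x)=x+x^2+\cdots+x^{2^{n-1}}$, and $\mathbb{F}_{2^n}^*=\mathbb{F}_{2^n}\setminus\{0\}$. For $F:\mathbb{F}_{2^n}\to\mathbb{F}_{2^n}$ and $(u,v)\in\mathbb{F}_{2^n}^2$, the Walsh transform is $W_F(u,v)=\sum_{x\in\mathbb{F}_{2^n}}(-1)^{tr_n(vF(x))+tr_n(ux)}$. In the projective plane $PG(2,2^n)$, a hyperoval is a set of $2^n+2$ points no three of which lie on a common line. A function (polynomial) $F$ over $\mathbb{F}_{2^n}$ is an o-polynomial if $\{(1,t,F(t)) : t\in\mathbb{F}_{2^n}\}\cup\{(0,1,0),(0,0,1)\}$ is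 a hyperoval of $PG(2,2^n)$. Equivalently (known fact), for every $a\in\mathbb{F}_{2^n}$ and $b\in\mathbb{F}_{2^n}^*$ the equation $F(x)+bx=a$ has $0$ or $2$ solutions in $\mathbb{F}_{2^n}$. *)

theory Defs
  imports Main "HOL-Library.Cardinality"
begin

text \<open>Finite field setting: a finite field 'a with 1 + 1 = 0 (characteristic 2)
  and CARD('a) = 2^n is (up to isomorphism) F_{2^n}.\<close>

definition tr :: "nat \<Rightarrow> 'a::field \<Rightarrow> 'a" where
  "tr n x = (\<Sum>i<n. x ^ (2 ^ i))"

text \<open>(-1)^{tr_n(y)}, where tr_n(y) \<in> F_2 = {0,1} \<subseteq> 'a.\<close>
definition chi :: "nat \<Rightarrow> 'a::field \<Rightarrow> int" where
  "chi n y = (if tr n y = 0 then 1 else -1)"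

definition walsh :: "nat \<Rightarrow> ('a::{field,finite} \<Rightarrow> 'a) \<Rightarrow> 'a \<Rightarrow> 'a \<Rightarrow> int" where
  "walsh n F u v = (\<Sum>x\<in>UNIV. chi n (v * F x) * chi n (u * x))"

text \<open>Points of PG(2,q) are represented by nonzero triples; two triples represent the
  same point iff proportional. Three points are collinear iff the determinant vanishes.\<close>

definition proportional :: "'a::field \<times> 'a \<times> 'a \<Rightarrow> 'a \<times> 'a \<times> 'a \<Rightarrow> bool" where
  "proportional p q = (\<exists>c. c \<noteq> 0 \<and> q = (c * fst p, c * fst (snd p), c * snd (snd p)))"

definition det3 :: "'a::field \<times> 'a \<times> 'a \<Rightarrow> 'a \<times> 'a \<times> 'a \<Rightarrow> 'a \<times> 'a \<times> 'a \<Rightarrow> 'a" where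
  "det3 p q r = (case p of (a1,a2,a3) \<Rightarrow> case q of (b1,b2,b3) \<Rightarrow> case r of (c1,c2,c3) \<Rightarrow>
      a1 * (b2 * c3 - b3 * c2) - a2 * (b1 * c3 - b3 * c1) + a3 * (b1 * c2 - b2 * c1))"

text \<open>A hyperoval of PG(2,q), q = CARD('a), given by a set S of representatives of
  pairwise distinct points: q+2 points, no three on a common line.\<close>
definition hyperoval :: "('a::{field,finite} \<times> 'a \<times> 'a) set \<Rightarrow> bool" where
  "hyperoval S =
     ((\<forall>p\<in>S. p \<noteq> (0,0,0)) \<and>
      (\<forall>p\<in>S. \<forall>q\<in>S. p \<noteq> q \<longrightarrow> \<not> proportional p q) \<and>
      card S = CARD('a) + 2 \<and>
      (\<forall>p\<in>S. \<forall>q\<in>S. \<forall>r\<in>S. p \<noteq> q \<and> p \<noteq> r \<and> q \<noteq> r \<longrightarrow> det3 p q r \<noteq> 0))"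

definition o_polynomial :: "('a::{field,finite} \<Rightarrow> 'a) \<Rightarrow> bool" where
  "o_polynomial F = hyperoval (range (\<lambda>t. (1, t, F t)) \<union> {(0,1,0), (0,0,1)})"

end

theory Submission
  imports Defs "HOL-Computational_Algebra.Polynomial"
begin

lemma fermat_fin:
  fixes x :: "'a::{field,finite}"
  shows "x ^ CARD('a) = x"
proof (cases "x = 0")
  case True
  then show ?thesis by simp
next
  case False
  let ?U = "UNIV - {0::'a}"
  have bij: "bij_betw (\<lambda>y. x * y) ?U ?U"
    apply (rule bij_betw_byWitness[where f'="\<lambda>y. y / x"])
    using False by auto
  have "prod (\<lambda>y. x * y) ?U = prod id ?U"
    using prod.reindex_bij_betw[OF bij, of id] by simp
  moreover have "prod (\<lambda>y. x * y) ?U = x ^ card ?U * prod id ?U"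
    by (simp add: prod.distrib)
  moreover have "prod id ?U \<noteq> 0" by simp
  ultimately have 1: "x ^ card ?U = 1" by simp
  have 2: "card ?U = CARD('a) - 1" by (simp add: card_Diff_subset)
  have 3: "CARD('a) = Suc (CARD('a) - 1)" using finite_UNIV_card_ge_0[of] by simp
  have "x ^ CARD('a) = x ^ (CARD('a) - 1) * x" by (subst 3) (simp only: power_Suc2)
  then show ?thesis using 1 2 by simp
qed

lemma char2_add_self:
  fixes x :: "'a::field" assumes "(1::'a) + 1 = 0" shows "x + x = 0"
proof -
  have "x + x = (1 + 1) * x" by (simp add: distrib_right)
  then show ?thesis using assms by simp
qed

lemma char2_minus:
  fixes x :: "'a::field" assumes "(1::'a) + 1 = 0" shows "- x = x"
  using char2_add_self[OF assms, of x] by (simp add: add_eq_0_iff)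

lemma frob2:
  fixes a b :: "'a::field" assumes "(1::'a) + 1 = 0" shows "(a + b) ^ 2 = a ^ 2 + b ^ 2"
proof -
  have "(a + b) ^ 2 = a ^ 2 + b ^ 2 + (a * b + a * b)" by (simp add: power2_eq_square algebra_simps)
  then show ?thesis using char2_add_self[OF assms] by simp
qed

lemma frob:
  fixes a b :: "'a::field" assumes "(1::'a) + 1 = 0" shows "(a + b) ^ (2 ^ i) = a ^ (2 ^ i) + b ^ (2 ^ i)"
proof (induction i)
  case 0 then show ?case by simp
next
  case (Suc i)
  have "(a + b) ^ (2 ^ Suc i) = ((a + b) ^ (2 ^ i)) ^ 2" by (simp add: power_mult[symmetric] mult.commute)
  also have "\<dots> = (a ^ (2 ^ i)) ^ 2 + (b ^ (2 ^ i)) ^ 2" using Suc frob2[OF assms] by simp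
  also have "\<dots> = a ^ (2 ^ Suc i) + b ^ (2 ^ Suc i)" by (simp add: power_mult[symmetric] mult.commute)
  finally show ?case .
qed

lemma frob2_sum:
  fixes f :: "nat \<Rightarrow> 'a::field" assumes "(1::'a) + 1 = 0"
  shows "(\<Sum>i<n. f i) ^ 2 = (\<Sum>i<n. f i ^ 2)"
  by (induction n) (simp_all add: frob2[OF assms])

lemma tr_add:
  fixes a b :: "'a::field" assumes "(1::'a) + 1 = 0" shows "tr n (a + b) = tr n a + tr n b"
  unfolding tr_def by (simp add: frob[OF assms] sum.distrib)

lemma tr_sq:
  fixes x :: "'a::{field,finite}" assumes "(1::'a) + 1 = 0" and "CARD('a) = 2 ^ n"
  shows "tr n x ^ 2 = tr n x"
proof -
  let ?f = "\<lambda>i. x ^ (2 ^ i)"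
  have "tr n x ^ 2 = (\<Sum>i<n. ?f i ^ 2)" unfolding tr_def by (rule frob2_sum[OF assms(1)])
  also have "\<dots> = (\<Sum>i<n. ?f (Suc i))" by (simp add: power_mult[symmetric] mult.commute)
  also have "\<dots> = (\<Sum>i<Suc n. ?f i) - ?f 0" using sum.lessThan_Suc_shift[of ?f n] by simp
  also have "\<dots> = (\<Sum>i<n. ?f i) + ?f n - ?f 0" by (simp only: sum.lessThan_Suc)
  also have "?f n = x" using fermat_fin[of x] assms(2) by simp
  finally show ?thesis unfolding tr_def by simp
qed

lemma tr_01:
  fixes x :: "'a::{field,finite}" assumes "(1::'a) + 1 = 0" and "CARD('a) = 2 ^ n"
  shows "tr n x = 0 \<or> tr n x = 1"
proof -
  have "tr n x * (tr n x - 1) = 0" using tr_sq[OF assms, of x] by (simp add: power2_eq_square algebra_simps)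
  then show ?thesis by simp
qed

lemma chi_add:
  fixes a b :: "'a::{field,finite}" assumes "(1::'a) + 1 = 0" and "CARD('a) = 2 ^ n"
  shows "chi n (a + b) = chi n a * chi n b"
  using tr_01[OF assms, of a] tr_01[OF assms, of b] tr_add[OF assms(1), of n a b] assms(1)
  unfolding chi_def by auto

lemma chi_zero: "chi n (0::'a::field) = 1"
  unfolding chi_def tr_def by (simp add: power_0_left)

lemma tr_poly: "tr n x = poly (\<Sum>i<n. monom 1 (2 ^ i)) x"
  unfolding tr_def by (simp add: poly_sum poly_monom)

lemma tr_nontriv:
  assumes "n \<ge> 1" and "CARD('a::{field,finite}) = 2 ^ n"
  shows "\<exists>y::'a. tr n y \<noteq> 0"
proof (rule ccontr)
  assume "\<not> ?thesis"
  then have all: "\<forall>y::'a. tr n y = 0" by simp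
  define p :: "'a poly" where "p = (\<Sum>i<n. monom 1 (2 ^ i))"
  have cp: "coeff p k = (if \<exists>i<n. k = 2 ^ i then 1 else 0)" for k
  proof -
    have "coeff p k = (\<Sum>i<n. if 2 ^ i = k then 1 else 0)" unfolding p_def by (simp add: coeff_sum)
    also have "\<dots> = (\<Sum>i\<in>{i. i < n \<and> 2 ^ i = k}. 1)"
      by (simp add: sum.If_cases Int_def conj_commute)
    also have "{i. i < n \<and> 2 ^ i = k} = (if \<exists>i<n. k = 2 ^ i then {LEAST i. 2 ^ i = k} else {})"
    proof (cases "\<exists>i<n. k = 2 ^ i")
      case True
      then obtain j where j: "j < n" "k = 2 ^ j" by auto
      have "{i. i < n \<and> 2 ^ i = k} = {j}" using j by auto
      moreover have "(LEAST i. 2 ^ i = k) = j" using j by (auto intro!: Least_equality)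
      ultimately show ?thesis using True by simp
    qed auto
    finally show ?thesis by auto
  qed
  have "coeff p (2 ^ (n - 1)) = 1" using assms(1) cp by auto
  then have pnz: "p \<noteq> 0" by auto
  have "degree p \<le> 2 ^ (n - 1)"
  proof (rule degree_le, intro allI impI)
    fix k :: nat assume "2 ^ (n - 1) < k"
    have "\<not> (\<exists>i<n. k = 2 ^ i)"
    proof
      assume "\<exists>i<n. k = 2 ^ i"
      then obtain i where "i < n" "k = 2 ^ i" by auto
      then have "k \<le> 2 ^ (n - 1)" by (simp add: power_increasing)
      then show False using \<open>2 ^ (n - 1) < k\<close> by simp
    qed
    then show "coeff p k = 0" using cp by simp
  qed
  moreover have "{x. poly p x = 0} = (UNIV :: 'a set)" using all unfolding p_def by (simp add: tr_poly)
  ultimately have "CARD('a) \<le> 2 ^ (n - 1)" using card_poly_roots_bound[OF pnz] by simp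
  moreover have "2 ^ (n - 1) < (2::nat) ^ n" by (rule power_strict_increasing) (use assms(1) in auto)
  ultimately show False using assms(2) by linarith
qed

definition cntM :: "('a::finite \<Rightarrow> 'b) \<Rightarrow> 'b \<Rightarrow> int" where
  "cntM G c = (\<Sum>x\<in>UNIV. if G x = c then 1 else 0)"

lemma swap3: "(\<Sum>c\<in>A. \<Sum>x\<in>B. \<Sum>y\<in>C. \<Sum>z\<in>D. f c x y z) = (\<Sum>x\<in>B. \<Sum>y\<in>C. \<Sum>z\<in>D. \<Sum>c\<in>A. f c x y z)"
proof -
  have "(\<Sum>c\<in>A. \<Sum>x\<in>B. \<Sum>y\<in>C. \<Sum>z\<in>D. f c x y z) = (\<Sum>x\<in>B. \<Sum>c\<in>A. \<Sum>y\<in>C. \<Sum>z\<in>D. f c x y z)"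
    by (rule sum.swap)
  also have "\<dots> = (\<Sum>x\<in>B. \<Sum>y\<in>C. \<Sum>c\<in>A. \<Sum>z\<in>D. f c x y z)"
    by (rule sum.cong[OF refl], rule sum.swap)
  also have "\<dots> = (\<Sum>x\<in>B. \<Sum>y\<in>C. \<Sum>z\<in>D. \<Sum>c\<in>A. f c x y z)"
    by (rule sum.cong[OF refl], rule sum.cong[OF refl], rule sum.swap)
  finally show ?thesis .
qed

lemma swap2: "(\<Sum>c\<in>A. \<Sum>x\<in>B. \<Sum>y\<in>C. f c x y) = (\<Sum>x\<in>B. \<Sum>y\<in>C. \<Sum>c\<in>A. f c x y)"
proof -
  have "(\<Sum>c\<in>A. \<Sum>x\<in>B. \<Sum>y\<in>C. f c x y) = (\<Sum>x\<in>B. \<Sum>c\<in>A. \<Sum>y\<in>C. f c x y)"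
    by (rule sum.swap)
  also have "\<dots> = (\<Sum>x\<in>B. \<Sum>y\<in>C. \<Sum>c\<in>A. f c x y)"
    by (rule sum.cong[OF refl], rule sum.swap)
  finally show ?thesis .
qed

lemma sum_UNIV_prod: "(\<Sum>p\<in>UNIV. f p) = (\<Sum>x\<in>UNIV. \<Sum>y\<in>UNIV. f (x, y))"
  by (simp only: sum.cartesian_product UNIV_Times_UNIV case_prod_eta)

lemma prod3_sums:
  fixes a b c :: "'x \<Rightarrow> 'r::comm_ring"
  shows "sum a A * sum b B * sum c C = (\<Sum>x\<in>A. \<Sum>y\<in>B. \<Sum>z\<in>C. a x * b y * c z)"
proof -
  have "sum a A * sum b B * sum c C = (\<Sum>x\<in>A. \<Sum>y\<in>B. a x * b y) * sum c C"
    by (simp only: sum_product)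
  also have "\<dots> = (\<Sum>x\<in>A. \<Sum>y\<in>B. a x * b y * sum c C)"
    by (simp only: sum_distrib_right)
  also have "\<dots> = (\<Sum>x\<in>A. \<Sum>y\<in>B. \<Sum>z\<in>C. a x * b y * c z)"
    by (simp only: sum_distrib_left)
  finally show ?thesis .
qed

lemma cube_count:
  fixes G :: "'a::finite \<Rightarrow> 'b::finite"
  shows "(\<Sum>x1\<in>UNIV. \<Sum>x2\<in>UNIV. \<Sum>x3\<in>UNIV. if G x1 = G x3 \<and> G x2 = G x3 then 1 else 0)
        = (\<Sum>c\<in>UNIV. (cntM G c) ^ 3)"
proof -
  have "(\<Sum>c\<in>UNIV. (cntM G c) ^ 3) = (\<Sum>c\<in>UNIV. \<Sum>x1\<in>UNIV. \<Sum>x2\<in>UNIV. \<Sum>x3\<in>UNIV.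
          (if G x1 = c then 1 else 0) * (if G x2 = c then 1 else 0) * (if G x3 = c then (1::int) else 0))"
    unfolding cntM_def power3_eq_cube by (simp only: prod3_sums)
  also have "\<dots> = (\<Sum>x1\<in>UNIV. \<Sum>x2\<in>UNIV. \<Sum>x3\<in>UNIV. \<Sum>c\<in>UNIV.
          (if G x1 = c then 1 else 0) * (if G x2 = c then 1 else 0) * (if G x3 = c then (1::int) else 0))"
    by (rule swap3)
  also have "\<dots> = (\<Sum>x1\<in>UNIV. \<Sum>x2\<in>UNIV. \<Sum>x3\<in>UNIV. if G x1 = G x3 \<and> G x2 = G x3 then 1 else 0)"
  proof (intro sum.cong refl)
    fix x1 x2 x3
    have pt: "\<And>c. (if G x1 = c then 1 else 0) * (if G x2 = c then 1 else 0) * (if G x3 = c then (1::int) else 0)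
       = (if G x1 = G x3 \<and> G x2 = G x3 then (if G x3 = c then 1 else 0) else 0)" by auto
    then show "(\<Sum>c\<in>UNIV. (if G x1 = c then 1 else 0) * (if G x2 = c then 1 else 0) * (if G x3 = c then (1::int) else 0))
       = (if G x1 = G x3 \<and> G x2 = G x3 then 1 else 0)" unfolding pt by (cases "G x1 = G x3 \<and> G x2 = G x3") (auto simp: sum.delta')
  qed
  finally show ?thesis by simp
qed

lemma square_count:
  fixes G :: "'a::finite \<Rightarrow> 'b::finite"
  shows "(\<Sum>x\<in>UNIV. \<Sum>y\<in>UNIV. if G x = G y then 1 else 0) = (\<Sum>c\<in>UNIV. (cntM G c) ^ 2)"
proof -
  have "(\<Sum>c\<in>UNIV. (cntM G c) ^ 2) = (\<Sum>c\<in>UNIV. \<Sum>x\<in>UNIV. \<Sum>y\<in>UNIV.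
          (if G x = c then 1 else 0) * (if G y = c then (1::int) else 0))"
    unfolding cntM_def power2_eq_square by (simp only: sum_product)
  also have "\<dots> = (\<Sum>x\<in>UNIV. \<Sum>y\<in>UNIV. \<Sum>c\<in>UNIV.
          (if G x = c then 1 else 0) * (if G y = c then (1::int) else 0))"
    by (rule swap2)
  also have "\<dots> = (\<Sum>x\<in>UNIV. \<Sum>y\<in>UNIV. if G x = G y then 1 else 0)"
  proof (intro sum.cong refl)
    fix x y
    have pt: "\<And>c. (if G x = c then 1 else 0) * (if G y = c then (1::int) else 0)
       = (if G x = G y then (if G y = c then 1 else 0) else 0)" by auto
    then show "(\<Sum>c\<in>UNIV. (if G x = c then 1 else 0) * (if G y = c then (1::int) else 0))
       = (if G x = G y then 1 else 0)" unfolding pt by (cases "G x = G y") (auto simp: sum.delta')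
  qed
  finally show ?thesis by simp
qed

lemma cnt_sum:
  fixes G :: "'a::finite \<Rightarrow> 'b::finite"
  shows "(\<Sum>c\<in>UNIV. cntM G c) = int CARD('a)"
proof -
  have "(\<Sum>c\<in>UNIV. cntM G c) = (\<Sum>x\<in>UNIV. \<Sum>c\<in>UNIV. if G x = c then 1 else 0)"
    unfolding cntM_def by (rule sum.swap)
  also have "\<dots> = (\<Sum>x\<in>(UNIV::'a set). 1)" by simp
  finally show ?thesis by simp
qed

lemma cnt_card: "cntM G c = int (card {x. G x = c})"
  unfolding cntM_def by (simp add: sum.If_cases)

lemma cnt_nonneg: "cntM G c \<ge> 0"
  unfolding cnt_card by simp

lemma char2_eq:
  fixes a b :: "'a::field" assumes "(1::'a) + 1 = 0" shows "a + b = 0 \<longleftrightarrow> a = b"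
proof
  assume "a + b = 0"
  then have "a = - b" by (simp add: eq_neg_iff_add_eq_0)
  then show "a = b" using char2_minus[OF assms, of b] by simp
next
  assume "a = b"
  then show "a + b = 0" using char2_add_self[OF assms, of a] by simp
qed

lemma sum_reindex_bij:
  fixes h :: "'a::finite \<Rightarrow> 'a"
  assumes "bij h" shows "(\<Sum>x\<in>UNIV. g (h x)) = (\<Sum>x\<in>UNIV. g x)"
  using sum.reindex_bij_betw[of h UNIV UNIV g] assms by simp

lemma orth:
  fixes a :: "'a::{field,finite}"
  assumes char: "(1::'a) + 1 = 0" and card: "CARD('a) = 2^n" and n1: "n \<ge> 1"
  shows "(\<Sum>v\<in>UNIV. chi n (v * a)) = (if a = 0 then int CARD('a) else 0)"
proof (cases "a = 0")
  case True
  then show ?thesis by (simp add: chi_zero)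
next
  case False
  have b1: "bij (\<lambda>v. v * a)"
    apply (rule bij_betw_byWitness[where f'="\<lambda>y. y / a"]) using False by auto
  have "(\<Sum>v\<in>UNIV. chi n (v * a)) = (\<Sum>v\<in>(UNIV::'a set). chi n v)"
    using sum_reindex_bij[OF b1, of "chi n"] by simp
  moreover have "(\<Sum>v\<in>(UNIV::'a set). chi n v) = 0"
  proof -
    obtain y :: 'a where y: "tr n y \<noteq> 0" using tr_nontriv[OF n1 card] by auto
    then have cy: "chi n y = -1" unfolding chi_def by simp
    have b2: "bij (\<lambda>v. v + y)"
      apply (rule bij_betw_byWitness[where f'="\<lambda>w. w - y"]) by auto
    have "(\<Sum>v\<in>(UNIV::'a set). chi n v) = (\<Sum>v\<in>UNIV. chi n (v + y))"
      using sum_reindex_bij[OF b2, of "chi n"] by simp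
    also have "\<dots> = (\<Sum>v\<in>(UNIV::'a set). chi n v * chi n y)"
      by (simp add: chi_add[OF char card])
    also have "\<dots> = - (\<Sum>v\<in>(UNIV::'a set). chi n v)" by (simp only: cy sum_distrib_right[symmetric])
    finally show ?thesis by simp
  qed
  ultimately show ?thesis using False by simp
qed

lemma pair_orth:
  fixes a b :: "'a::{field,finite}"
  assumes char: "(1::'a) + 1 = 0" and card: "CARD('a) = 2^n" and n1: "n \<ge> 1"
  shows "(\<Sum>v1\<in>UNIV. \<Sum>v2\<in>UNIV. chi n (v1 * a + v2 * b)) = (if a = 0 \<and> b = 0 then (int CARD('a))^2 else 0)"
proof -
  have "(\<Sum>v1\<in>UNIV. \<Sum>v2\<in>UNIV. chi n (v1 * a + v2 * b)) = (\<Sum>v1\<in>UNIV. \<Sum>v2\<in>UNIV. chi n (v1 * a) * chi n (v2 * b))"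
    by (simp add: chi_add[OF char card])
  also have "\<dots> = (\<Sum>v1\<in>UNIV. chi n (v1 * a)) * (\<Sum>v2\<in>UNIV. chi n (v2 * b))"
    by (simp only: sum_product)
  also have "\<dots> = (if a = 0 \<and> b = 0 then (int CARD('a))^2 else 0)"
    by (simp add: orth[OF char card n1] power2_eq_square)
  finally show ?thesis .
qed

lemma P1:
  fixes G :: "'a::{field,finite} \<Rightarrow> 'a"
  assumes char: "(1::'a) + 1 = 0" and card: "CARD('a) = 2^n" and n1: "n \<ge> 1"
  shows "(\<Sum>v1\<in>UNIV. \<Sum>v2\<in>UNIV. \<Sum>x1\<in>UNIV. \<Sum>x2\<in>UNIV. \<Sum>x3\<in>UNIV.
            chi n (v1 * (G x1 + G x3) + v2 * (G x2 + G x3)))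
       = (int CARD('a))^2 * (\<Sum>c\<in>UNIV. (cntM G c) ^ 3)"
proof -
  let ?f = "\<lambda>v1 v2 x1 x2 x3. chi n (v1 * (G x1 + G x3) + v2 * (G x2 + G x3))"
  have "(\<Sum>v1\<in>UNIV. \<Sum>v2\<in>UNIV. \<Sum>x1\<in>UNIV. \<Sum>x2\<in>UNIV. \<Sum>x3\<in>UNIV. ?f v1 v2 x1 x2 x3)
      = (\<Sum>v1\<in>UNIV. \<Sum>x1\<in>UNIV. \<Sum>x2\<in>UNIV. \<Sum>x3\<in>UNIV. \<Sum>v2\<in>UNIV. ?f v1 v2 x1 x2 x3)"
    by (rule sum.cong[OF refl], rule swap3)
  also have "\<dots> = (\<Sum>x1\<in>UNIV. \<Sum>x2\<in>UNIV. \<Sum>x3\<in>UNIV. \<Sum>v1\<in>UNIV. \<Sum>v2\<in>UNIV. ?f v1 v2 x1 x2 x3)"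
    by (rule swap3)
  also have "\<dots> = (\<Sum>x1\<in>UNIV. \<Sum>x2\<in>UNIV. \<Sum>x3\<in>UNIV.
        (int CARD('a))^2 * (if G x1 = G x3 \<and> G x2 = G x3 then 1 else 0))"
    by (intro sum.cong refl) (simp add: pair_orth[OF char card n1] char2_eq[OF char])
  also have "\<dots> = (int CARD('a))^2 * (\<Sum>x1\<in>UNIV. \<Sum>x2\<in>UNIV. \<Sum>x3\<in>UNIV.
        (if G x1 = G x3 \<and> G x2 = G x3 then 1 else 0))"
    by (simp only: sum_distrib_left)
  also have "\<dots> = (int CARD('a))^2 * (\<Sum>c\<in>UNIV. (cntM G c) ^ 3)"
    by (simp only: cube_count)
  finally show ?thesis .
qed

lemma P4:
  fixes G :: "'a::{field,finite} \<Rightarrow> 'a"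
  assumes char: "(1::'a) + 1 = 0" and card: "CARD('a) = 2^n" and n1: "n \<ge> 1"
  shows "(\<Sum>v\<in>UNIV. \<Sum>x\<in>UNIV. \<Sum>y\<in>UNIV. chi n (v * (G x + G y)))
       = int CARD('a) * (\<Sum>c\<in>UNIV. (cntM G c) ^ 2)"
proof -
  have "(\<Sum>v\<in>UNIV. \<Sum>x\<in>UNIV. \<Sum>y\<in>UNIV. chi n (v * (G x + G y)))
      = (\<Sum>x\<in>UNIV. \<Sum>y\<in>UNIV. \<Sum>v\<in>UNIV. chi n (v * (G x + G y)))"
    by (rule swap2)
  also have "\<dots> = (\<Sum>x\<in>UNIV. \<Sum>y\<in>UNIV. int CARD('a) * (if G x = G y then 1 else 0))"
    by (intro sum.cong refl) (simp add: orth[OF char card n1] char2_eq[OF char])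
  also have "\<dots> = int CARD('a) * (\<Sum>c\<in>UNIV. (cntM G c) ^ 2)"
    by (simp only: sum_distrib_left[symmetric] square_count)
  finally show ?thesis .
qed

lemma sum_triple_filter:
  fixes g :: "'a::finite \<Rightarrow> 'a \<Rightarrow> 'a \<Rightarrow> 'r::comm_monoid_add"
  shows "(\<Sum>(x1,x2,x3)\<in>{(x1,x2,x3). P x1 x2 x3}. g x1 x2 x3)
       = (\<Sum>x1\<in>UNIV. \<Sum>x2\<in>UNIV. \<Sum>x3\<in>UNIV. if P x1 x2 x3 then g x1 x2 x3 else 0)"
proof -
  have "{(x1,x2,x3). P x1 x2 x3} = {p \<in> UNIV. case p of (x1,x2,x3) \<Rightarrow> P x1 x2 x3}" by auto
  then have "(\<Sum>(x1,x2,x3)\<in>{(x1,x2,x3). P x1 x2 x3}. g x1 x2 x3)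
      = (\<Sum>p\<in>UNIV. if (case p of (x1,x2,x3) \<Rightarrow> P x1 x2 x3) then (case p of (x1,x2,x3) \<Rightarrow> g x1 x2 x3) else 0)"
    by (simp only: sum.inter_filter[OF finite_class.finite_UNIV])
  also have "\<dots> = (\<Sum>x1\<in>UNIV. \<Sum>x2\<in>UNIV. \<Sum>x3\<in>UNIV. if P x1 x2 x3 then g x1 x2 x3 else 0)"
    by (simp only: sum_UNIV_prod prod.case)
  finally show ?thesis .
qed

lemma T1_eq:
  fixes F :: "'a::{field,finite} \<Rightarrow> 'a"
  assumes char: "(1::'a) + 1 = 0" and card: "CARD('a) = 2^n" and n1: "n \<ge> 1"
  shows "int CARD('a) * (\<Sum>v1\<in>UNIV. \<Sum>v2\<in>UNIV.
                 \<Sum>(x1,x2,x3)\<in>{(x1,x2,x3). v1 * x1 + v2 * x2 + (v1 + v2) * x3 = 0}.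
                   chi n (v1 * F x1 + v2 * F x2 + (v1 + v2) * F x3))
     = (\<Sum>u\<in>UNIV. (int CARD('a))^2 * (\<Sum>c\<in>UNIV. (cntM (\<lambda>x. F x + u * x) c) ^ 3))"
proof -
  let ?q = "int CARD('a)"
  let ?psi = "\<lambda>u v1 v2 x1 x2 x3. chi n (v1 * ((F x1 + u * x1) + (F x3 + u * x3)) + v2 * ((F x2 + u * x2) + (F x3 + u * x3)))"
  have step: "?q * (if v1 * x1 + v2 * x2 + (v1 + v2) * x3 = 0 then chi n (v1 * F x1 + v2 * F x2 + (v1 + v2) * F x3) else 0)
      = (\<Sum>u\<in>UNIV. ?psi u v1 v2 x1 x2 x3)" for v1 v2 x1 x2 x3
  proof -
    let ?L = "v1 * x1 + v2 * x2 + (v1 + v2) * x3"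
    let ?s = "v1 * F x1 + v2 * F x2 + (v1 + v2) * F x3"
    have "?q * (if ?L = 0 then chi n ?s else 0) = (\<Sum>u\<in>UNIV. chi n (u * ?L)) * chi n ?s"
      by (simp add: orth[OF char card n1])
    also have "\<dots> = (\<Sum>u\<in>UNIV. chi n (u * ?L + ?s))"
      by (simp add: sum_distrib_right chi_add[OF char card])
    also have "\<dots> = (\<Sum>u\<in>UNIV. ?psi u v1 v2 x1 x2 x3)"
      by (intro sum.cong refl arg_cong[where f="chi n"]) (simp add: algebra_simps)
    finally show ?thesis .
  qed
  have "?q * (\<Sum>v1\<in>UNIV. \<Sum>v2\<in>UNIV.
                 \<Sum>(x1,x2,x3)\<in>{(x1,x2,x3). v1 * x1 + v2 * x2 + (v1 + v2) * x3 = 0}.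
                   chi n (v1 * F x1 + v2 * F x2 + (v1 + v2) * F x3))
     = (\<Sum>v1\<in>UNIV. \<Sum>v2\<in>UNIV. \<Sum>x1\<in>UNIV. \<Sum>x2\<in>UNIV. \<Sum>x3\<in>UNIV.
          ?q * (if v1 * x1 + v2 * x2 + (v1 + v2) * x3 = 0 then chi n (v1 * F x1 + v2 * F x2 + (v1 + v2) * F x3) else 0))"
    by (simp only: sum_triple_filter sum_distrib_left)
  also have "\<dots> = (\<Sum>v1\<in>UNIV. \<Sum>v2\<in>UNIV. \<Sum>x1\<in>UNIV. \<Sum>x2\<in>UNIV. \<Sum>x3\<in>UNIV. \<Sum>u\<in>UNIV. ?psi u v1 v2 x1 x2 x3)"
    by (simp only: step)
  also have "\<dots> = (\<Sum>v1\<in>UNIV. \<Sum>v2\<in>UNIV. \<Sum>u\<in>UNIV. \<Sum>x1\<in>UNIV. \<Sum>x2\<in>UNIV. \<Sum>x3\<in>UNIV. ?psi u v1 v2 x1 x2 x3)"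
    by (rule sum.cong[OF refl], rule sum.cong[OF refl], rule swap3[symmetric])
  also have "\<dots> = (\<Sum>v1\<in>UNIV. \<Sum>u\<in>UNIV. \<Sum>v2\<in>UNIV. \<Sum>x1\<in>UNIV. \<Sum>x2\<in>UNIV. \<Sum>x3\<in>UNIV. ?psi u v1 v2 x1 x2 x3)"
    by (rule sum.cong[OF refl], rule sum.swap)
  also have "\<dots> = (\<Sum>u\<in>UNIV. \<Sum>v1\<in>UNIV. \<Sum>v2\<in>UNIV. \<Sum>x1\<in>UNIV. \<Sum>x2\<in>UNIV. \<Sum>x3\<in>UNIV. ?psi u v1 v2 x1 x2 x3)"
    by (rule sum.swap)
  also have "\<dots> = (\<Sum>u\<in>UNIV. ?q^2 * (\<Sum>c\<in>UNIV. (cntM (\<lambda>x. F x + u * x) c) ^ 3))"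
    by (rule sum.cong[OF refl], rule P1[OF char card n1])
  finally show ?thesis .
qed

lemma walsh0: "walsh n F 0 v = (\<Sum>x\<in>UNIV. chi n (v * F x))"
  unfolding walsh_def by (simp add: chi_zero)

lemma S2_eq:
  fixes F :: "'a::{field,finite} \<Rightarrow> 'a"
  assumes char: "(1::'a) + 1 = 0" and card: "CARD('a) = 2^n" and n1: "n \<ge> 1"
  shows "(\<Sum>v1\<in>UNIV. \<Sum>v2\<in>UNIV. walsh n F 0 v1 * walsh n F 0 v2 * walsh n F 0 (v1 + v2))
     = (int CARD('a))^2 * (\<Sum>c\<in>UNIV. (cntM F c) ^ 3)"
proof -
  have "walsh n F 0 v1 * walsh n F 0 v2 * walsh n F 0 (v1 + v2)
      = (\<Sum>x1\<in>UNIV. \<Sum>x2\<in>UNIV. \<Sum>x3\<in>UNIV. chi n (v1 * (F x1 + F x3) + v2 * (F x2 + F x3)))" for v1 v2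
  proof -
    have "walsh n F 0 v1 * walsh n F 0 v2 * walsh n F 0 (v1 + v2)
      = (\<Sum>x1\<in>UNIV. \<Sum>x2\<in>UNIV. \<Sum>x3\<in>UNIV. chi n (v1 * F x1) * chi n (v2 * F x2) * chi n ((v1 + v2) * F x3))"
      unfolding walsh0 by (rule prod3_sums)
    also have "\<dots> = (\<Sum>x1\<in>UNIV. \<Sum>x2\<in>UNIV. \<Sum>x3\<in>UNIV. chi n (v1 * (F x1 + F x3) + v2 * (F x2 + F x3)))"
    proof (intro sum.cong refl)
      fix x1 x2 x3
      have "v1 * (F x1 + F x3) + v2 * (F x2 + F x3) = v1 * F x1 + v2 * F x2 + (v1 + v2) * F x3"
        by (simp add: algebra_simps)
      then show "chi n (v1 * F x1) * chi n (v2 * F x2) * chi n ((v1 + v2) * F x3) = chi n (v1 * (F x1 + F x3) + v2 * (F x2 + F x3))"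
        by (simp add: chi_add[OF char card])
    qed
    finally show ?thesis .
  qed
  then have "(\<Sum>v1\<in>UNIV. \<Sum>v2\<in>UNIV. walsh n F 0 v1 * walsh n F 0 v2 * walsh n F 0 (v1 + v2))
     = (\<Sum>v1\<in>UNIV. \<Sum>v2\<in>UNIV. \<Sum>x1\<in>UNIV. \<Sum>x2\<in>UNIV. \<Sum>x3\<in>UNIV. chi n (v1 * (F x1 + F x3) + v2 * (F x2 + F x3)))"
    by simp
  also have "\<dots> = (int CARD('a))^2 * (\<Sum>c\<in>UNIV. (cntM F c) ^ 3)"
    by (rule P1[OF char card n1])
  finally show ?thesis .
qed

lemma S3_eq:
  fixes F :: "'a::{field,finite} \<Rightarrow> 'a"
  assumes char: "(1::'a) + 1 = 0" and card: "CARD('a) = 2^n" and n1: "n \<ge> 1"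
  shows "(\<Sum>v\<in>UNIV - {0}. (walsh n F 0 v) ^ 2)
     = int CARD('a) * (\<Sum>c\<in>UNIV. (cntM F c) ^ 2) - (int CARD('a))^2"
proof -
  have w2: "(walsh n F 0 v) ^ 2 = (\<Sum>x\<in>UNIV. \<Sum>y\<in>UNIV. chi n (v * (F x + F y)))" for v
  proof -
    have "(walsh n F 0 v) ^ 2 = (\<Sum>x\<in>UNIV. \<Sum>y\<in>UNIV. chi n (v * F x) * chi n (v * F y))"
      unfolding walsh0 power2_eq_square by (rule sum_product)
    also have "\<dots> = (\<Sum>x\<in>UNIV. \<Sum>y\<in>UNIV. chi n (v * (F x + F y)))"
      by (simp add: chi_add[OF char card] distrib_left)
    finally show ?thesis .
  qed
  have "(\<Sum>v\<in>UNIV. (walsh n F 0 v) ^ 2) = int CARD('a) * (\<Sum>c\<in>UNIV. (cntM F c) ^ 2)"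
    unfolding w2 by (rule P4[OF char card n1])
  moreover have "walsh n F 0 0 = int CARD('a)" unfolding walsh0 by (simp add: chi_zero)
  ultimately show ?thesis by (simp add: sum_diff1)
qed

lemma C2_total:
  fixes F :: "'a::{field,finite} \<Rightarrow> 'a"
  shows "(\<Sum>u\<in>UNIV. \<Sum>c\<in>UNIV. (cntM (\<lambda>x. F x + u * x) c) ^ 2) = 2 * (int CARD('a))^2 - int CARD('a)"
proof -
  let ?q = "int CARD('a)"
  have "(\<Sum>u\<in>UNIV. \<Sum>c\<in>UNIV. (cntM (\<lambda>x. F x + u * x) c) ^ 2)
      = (\<Sum>u\<in>UNIV. \<Sum>x\<in>UNIV. \<Sum>y\<in>UNIV. if F x + u * x = F y + u * y then 1 else 0)"
    by (simp only: square_count)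
  also have "\<dots> = (\<Sum>x\<in>UNIV. \<Sum>y\<in>UNIV. \<Sum>u\<in>UNIV. if F x + u * x = F y + u * y then 1 else 0)"
    by (rule swap2)
  also have "\<dots> = (\<Sum>x\<in>(UNIV::'a set). \<Sum>y\<in>(UNIV::'a set). 1 + (if x = y then ?q - 1 else 0))"
  proof (intro sum.cong refl)
    fix x y :: 'a
    show "(\<Sum>u\<in>UNIV. if F x + u * x = F y + u * y then 1 else 0) = 1 + (if x = y then ?q - 1 else 0)"
    proof (cases "x = y")
      case True then show ?thesis by simp
    next
      case False
      let ?u0 = "(F y - F x) / (x - y)"
      have "F x + u * x = F y + u * y \<longleftrightarrow> u = ?u0" for u
      proof -
        have "x - y \<noteq> 0" using False by simp
        have "F x + u * x = F y + u * y \<longleftrightarrow> u * (x - y) = F y - F x"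
          by (auto simp: algebra_simps)
        also have "\<dots> \<longleftrightarrow> u = ?u0" using \<open>x - y \<noteq> 0\<close> by (simp add: eq_divide_eq)
        finally show ?thesis .
      qed
      then have "(\<Sum>u\<in>UNIV. if F x + u * x = F y + u * y then 1 else (0::int)) = (\<Sum>u\<in>UNIV. if u = ?u0 then 1 else 0)"
        by simp
      also have "\<dots> = 1" by simp
      finally show ?thesis using False by simp
    qed
  qed
  also have "\<dots> = (\<Sum>x\<in>(UNIV::'a set). ?q + (?q - 1))"
    by (simp add: sum.distrib)
  also have "\<dots> = 2 * ?q^2 - ?q" by (simp add: power2_eq_square algebra_simps)
  finally show ?thesis .
qed

lemma card_le2_iff:
  assumes "finite A"
  shows "card A \<le> 2 \<longleftrightarrow> \<not> (\<exists>x y z. x \<in> A \<and> y \<in> A \<and> z \<in> A \<and> x \<noteq> y \<and> x \<noteq> z \<and> y \<noteq> z)"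
proof
  assume c: "card A \<le> 2"
  show "\<not> (\<exists>x y z. x \<in> A \<and> y \<in> A \<and> z \<in> A \<and> x \<noteq> y \<and> x \<noteq> z \<and> y \<noteq> z)"
  proof
    assume "\<exists>x y z. x \<in> A \<and> y \<in> A \<and> z \<in> A \<and> x \<noteq> y \<and> x \<noteq> z \<and> y \<noteq> z"
    then obtain x y z where h: "x \<in> A" "y \<in> A" "z \<in> A" "x \<noteq> y" "x \<noteq> z" "y \<noteq> z" by blast
    then have "card {x, y, z} \<le> card A" by (intro card_mono assms) auto
    moreover have "card {x, y, z} = 3" using h by simp
    ultimately show False using c by simp
  qed
next
  assume n: "\<not> (\<exists>x y z. x \<in> A \<and> y \<in> A \<and> z \<in> A \<and> x \<noteq> y \<and> x \<noteq> z \<and> y \<noteq> z)"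
  show "card A \<le> 2"
  proof (rule ccontr)
    assume "\<not> card A \<le> 2"
    then have "Suc 2 \<le> card A" by simp
    then obtain a B where aB: "A = insert a B" "a \<notin> B" "2 \<le> card B" "finite B"
      unfolding card_le_Suc_iff by blast
    then have "Suc 1 \<le> card B" by simp
    then obtain b C where bC: "B = insert b C" "b \<notin> C" "1 \<le> card C" "finite C"
      unfolding card_le_Suc_iff by blast
    then have "Suc 0 \<le> card C" by simp
    then obtain c D where cD: "C = insert c D" "c \<notin> D"
      unfolding card_le_Suc_iff by blast
    have "a \<in> A" "b \<in> A" "c \<in> A" "a \<noteq> b" "a \<noteq> c" "b \<noteq> c" using aB bC cD by auto
    then show False using n by blast
  qed
qed

lemma det_aff:
  "det3 (1, s, F s) (1, t, F t) (1, w, F w) = (t - s) * (F w - F s) - (w - s) * (F t - F s)"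
  by (simp add: det3_def algebra_simps)

lemma hyper_iff:
  fixes F :: "'a::{field,finite} \<Rightarrow> 'a"
  shows "o_polynomial F \<longleftrightarrow> inj F \<and> (\<forall>s t w. s \<noteq> t \<and> s \<noteq> w \<and> t \<noteq> w \<longrightarrow> det3 (1, s, F s) (1, t, F t) (1, w, F w) \<noteq> 0)"
proof
  assume h: "o_polynomial F"
  let ?S = "range (\<lambda>t. (1::'a, t, F t)) \<union> {(0, 1, 0), (0, 0, 1)}"
  have "hyperoval ?S" using h by (simp only: o_polynomial_def)
  then have D: "\<forall>p\<in>?S. \<forall>q\<in>?S. \<forall>r\<in>?S. p \<noteq> q \<and> p \<noteq> r \<and> q \<noteq> r \<longrightarrow> det3 p q r \<noteq> 0"
    unfolding hyperoval_def by (elim conjE)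
  note d = D[rule_format]
  have "inj F"
  proof (rule injI, rule ccontr)
    fix s t assume e: "F s = F t" and ne: "s \<noteq> t"
    have "det3 (1, s, F s) (1, t, F t) (0, 1, 0) \<noteq> 0"
      by (rule d) (simp_all add: ne)
    then show False using e by (simp add: det3_def)
  qed
  moreover have "\<forall>s t w. s \<noteq> t \<and> s \<noteq> w \<and> t \<noteq> w \<longrightarrow> det3 (1, s, F s) (1, t, F t) (1, w, F w) \<noteq> 0"
  proof (intro allI impI)
    fix s t w :: 'a assume a: "s \<noteq> t \<and> s \<noteq> w \<and> t \<noteq> w"
    show "det3 (1, s, F s) (1, t, F t) (1, w, F w) \<noteq> 0"
      by (rule d) (use a in simp_all)
  qed
  ultimately show "inj F \<and> (\<forall>s t w. s \<noteq> t \<and> s \<noteq> w \<and> t \<noteq> w \<longrightarrow> det3 (1, s, F s) (1, t, F t) (1, w, F w) \<noteq> 0)"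
    by blast
next
  assume h: "inj F \<and> (\<forall>s t w. s \<noteq> t \<and> s \<noteq> w \<and> t \<noteq> w \<longrightarrow> det3 (1, s, F s) (1, t, F t) (1, w, F w) \<noteq> 0)"
  then have inj: "inj F" and dd: "\<And>s t w. s \<noteq> t \<Longrightarrow> s \<noteq> w \<Longrightarrow> t \<noteq> w \<Longrightarrow> det3 (1, s, F s) (1, t, F t) (1, w, F w) \<noteq> 0"
    by blast+
  have injF: "F s = F t \<longleftrightarrow> s = t" for s t using inj by (simp add: inj_eq)
  let ?S = "range (\<lambda>t. (1::'a, t, F t)) \<union> {(0, 1, 0), (0, 0, 1)}"
  have c1: "\<forall>p\<in>?S. p \<noteq> (0,0,0)" by simp
  have m: "\<And>x. x \<in> ?S \<Longrightarrow> (\<exists>t. x = (1, t, F t)) \<or> x = (0, 1, 0) \<or> x = (0, 0, 1)" by blast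
  have c2: "\<forall>p\<in>?S. \<forall>q\<in>?S. p \<noteq> q \<longrightarrow> \<not> proportional p q"
  proof (intro ballI impI notI)
    fix p q assume p: "p \<in> ?S" and q: "q \<in> ?S" and ne: "p \<noteq> q" and pr: "proportional p q"
    from pr obtain c where c0: "c \<noteq> 0" and qe: "q = (c * fst p, c * fst (snd p), c * snd (snd p))"
      unfolding proportional_def by blast
    from m[OF p] m[OF q] c0 qe ne show False
      by (elim disjE exE) auto
  qed
  have "card ?S = card (range (\<lambda>t. (1::'a, t, F t))) + card {(0::'a, 1::'a, 0::'a), (0, 0, 1)}"
    by (rule card_Un_disjoint) (simp_all add: image_iff)
  moreover have "card (range (\<lambda>t. (1::'a, t, F t))) = CARD('a)"
    by (rule card_image) (simp add: inj_on_def)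
  ultimately have c3: "card ?S = CARD('a) + 2" by simp
  have c4: "\<forall>p\<in>?S. \<forall>q\<in>?S. \<forall>r\<in>?S. p \<noteq> q \<and> p \<noteq> r \<and> q \<noteq> r \<longrightarrow> det3 p q r \<noteq> 0"
  proof (intro ballI impI)
    fix p q r assume p: "p \<in> ?S" and q: "q \<in> ?S" and r: "r \<in> ?S" and dist: "p \<noteq> q \<and> p \<noteq> r \<and> q \<noteq> r"
    from m[OF p] m[OF q] m[OF r] dist show "det3 p q r \<noteq> 0"
      apply (elim disjE exE)
      subgoal using dd by clarsimp
      apply (auto simp: det3_def injF)
      done
  qed
  show "o_polynomial F" unfolding o_polynomial_def hyperoval_def by (intro conjI c1 c2 c3 c4)
qed

lemma cond_iff:
  fixes F :: "'a::{field,finite} \<Rightarrow> 'a"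
  shows "((\<forall>c. cntM F c \<le> 1) \<and> (\<forall>u. u \<noteq> 0 \<longrightarrow> (\<forall>c. cntM (\<lambda>x. F x + u * x) c \<le> 2)))
     \<longleftrightarrow> o_polynomial F"
proof -
  have i1: "(\<forall>c. cntM F c \<le> 1) \<longleftrightarrow> inj F"
  proof -
    have "(\<forall>c. cntM F c \<le> 1) \<longleftrightarrow> (\<forall>c. card {x. F x = c} \<le> Suc 0)"
      by (simp add: cnt_card)
    also have "\<dots> \<longleftrightarrow> (\<forall>c. \<forall>a1\<in>{x. F x = c}. \<forall>a2\<in>{x. F x = c}. a1 = a2)"
      by (simp only: card_le_Suc0_iff_eq[OF finite])
    also have "\<dots> \<longleftrightarrow> inj F" unfolding inj_def by auto
    finally show ?thesis .
  qed
  have i2: "(\<forall>c. cntM G c \<le> 2) \<longleftrightarrow> \<not> (\<exists>x y z. G x = G y \<and> G y = G z \<and> x \<noteq> y \<and> x \<noteq> z \<and> y \<noteq> z)"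
    for G :: "'a \<Rightarrow> 'a"
  proof -
    have "(\<forall>c. cntM G c \<le> 2) \<longleftrightarrow> (\<forall>c. card {x. G x = c} \<le> 2)"
      by (simp add: cnt_card)
    also have "\<dots> \<longleftrightarrow> (\<forall>c. \<not> (\<exists>x y z. x \<in> {x. G x = c} \<and> y \<in> {x. G x = c} \<and> z \<in> {x. G x = c} \<and> x \<noteq> y \<and> x \<noteq> z \<and> y \<noteq> z))"
      by (simp only: card_le2_iff[OF finite])
    also have "\<dots> \<longleftrightarrow> \<not> (\<exists>x y z. G x = G y \<and> G y = G z \<and> x \<noteq> y \<and> x \<noteq> z \<and> y \<noteq> z)"
      by (auto; metis)
    finally show ?thesis .
  qed
  show ?thesis
  proof
    assume h: "(\<forall>c. cntM F c \<le> 1) \<and> (\<forall>u. u \<noteq> 0 \<longrightarrow> (\<forall>c. cntM (\<lambda>x. F x + u * x) c \<le> 2))"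
    then have inj: "inj F" using i1 by blast
    have "det3 (1, s, F s) (1, t, F t) (1, w, F w) \<noteq> 0" if d: "s \<noteq> t" "s \<noteq> w" "t \<noteq> w" for s t w
    proof
      assume z: "det3 (1, s, F s) (1, t, F t) (1, w, F w) = 0"
      have st: "s - t \<noteq> 0" "t - s \<noteq> 0" using d by auto
      have fst: "F t - F s \<noteq> 0" using inj d unfolding inj_def by auto
      define u where "u = (F t - F s) / (s - t)"
      have u0: "u \<noteq> 0" unfolding u_def using st fst by simp
      have e1: "F s + u * s = F t + u * t"
      proof -
        have "u * (s - t) = F t - F s" unfolding u_def using st by simp
        then show ?thesis by (simp add: algebra_simps)
      qed
      have e2: "F w + u * w = F s + u * s"
      proof -
        have z': "(t - s) * (F w - F s) = (w - s) * (F t - F s)" using z by (simp add: det_aff)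
        have "F w - F s = (w - s) * (F t - F s) / (t - s)" using z' st by (simp add: eq_divide_eq mult.commute)
        also have "\<dots> = u * (s - w)" unfolding u_def using st
          by (simp add: field_simps)
        finally show ?thesis by (simp add: algebra_simps)
      qed
      have "\<forall>c. cntM (\<lambda>x. F x + u * x) c \<le> 2" using h u0 by blast
      moreover have "\<exists>x y z. F x + u * x = F y + u * y \<and> F y + u * y = F z + u * z \<and> x \<noteq> y \<and> x \<noteq> z \<and> y \<noteq> z"
        by (rule exI[of _ s], rule exI[of _ t], rule exI[of _ w]) (use e1 e2 d in auto)
      ultimately show False unfolding i2 by blast
    qed
    then show "o_polynomial F" unfolding hyper_iff using inj by blast
  next
    assume "o_polynomial F"
    then have inj: "inj F" and dd: "\<And>s t w. s \<noteq> t \<Longrightarrow> s \<noteq> w \<Longrightarrow> t \<noteq> w \<Longrightarrow> det3 (1, s, F s) (1, t, F t) (1, w, F w) \<noteq> 0"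
      unfolding hyper_iff by blast+
    have "\<forall>c. cntM (\<lambda>x. F x + u * x) c \<le> 2" for u
      unfolding i2
    proof
      assume "\<exists>x y z. F x + u * x = F y + u * y \<and> F y + u * y = F z + u * z \<and> x \<noteq> y \<and> x \<noteq> z \<and> y \<noteq> z"
      then obtain s t w where e: "F s + u * s = F t + u * t" "F t + u * t = F w + u * w" and d: "s \<noteq> t" "s \<noteq> w" "t \<noteq> w"
        by blast
      define c where "c = F s + u * s"
      have fs: "F s = c - u * s" and ft: "F t = c - u * t" and fw: "F w = c - u * w"
        using e unfolding c_def by (simp_all add: algebra_simps)
      have "det3 (1, s, c - u * s) (1, t, c - u * t) (1, w, c - u * w) = 0"
        by (simp add: det3_def algebra_simps)
      then have "det3 (1, s, F s) (1, t, F t) (1, w, F w) = 0" by (simp only: fs ft fw)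
      then show False using dd d by blast
    qed
    then show "(\<forall>c. cntM F c \<le> 1) \<and> (\<forall>u. u \<noteq> 0 \<longrightarrow> (\<forall>c. cntM (\<lambda>x. F x + u * x) c \<le> 2))"
      using inj i1 by blast
  qed
qed

lemma f3_props:
  fixes m :: int assumes "m \<ge> 0"
  shows "m * (m - 1) * (m - 2) \<ge> 0 \<and> (m * (m - 1) * (m - 2) = 0 \<longleftrightarrow> m \<le> 2)"
proof (cases "m \<le> 2")
  case True
  then have "m = 0 \<or> m = 1 \<or> m = 2" using assms by auto
  then show ?thesis by auto
next
  case False
  then have "m * (m - 1) * (m - 2) > 0" by (simp add: mult_pos_pos)
  then show ?thesis using False by simp
qed

lemma sq_props:
  fixes m :: int assumes "m \<ge> 0"
  shows "m ^ 2 - m \<ge> 0 \<and> (m ^ 2 - m = 0 \<longleftrightarrow> m \<le> 1)"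
proof (cases "m \<le> 1")
  case True
  then have "m = 0 \<or> m = 1" using assms by auto
  then show ?thesis by auto
next
  case False
  then have "m * (m - 1) > 0" by (simp add: mult_pos_pos)
  then have "m ^ 2 - m > 0" by (simp add: power2_eq_square algebra_simps)
  then show ?thesis using False by simp
qed

theorem mainTheorem2:
  fixes F :: "'a::{field,finite} \<Rightarrow> 'a" and n :: nat
  assumes "n \<ge> 1" and "CARD('a) = 2 ^ n" and "(1::'a) + 1 = 0"
  defines "E \<equiv>
      2 ^ n * (\<Sum>v1\<in>UNIV. \<Sum>v2\<in>UNIV.
                 \<Sum>(x1,x2,x3)\<in>{(x1,x2,x3). v1 * x1 + v2 * x2 + (v1 + v2) * x3 = 0}.
                   chi n (v1 * F x1 + v2 * F x2 + (v1 + v2) * F x3))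
    - (\<Sum>v1\<in>UNIV. \<Sum>v2\<in>UNIV. walsh n F 0 v1 * walsh n F 0 v2 * walsh n F 0 (v1 + v2))
    + 2 ^ (n + 2) * (\<Sum>v\<in>UNIV - {0}. (walsh n F 0 v) ^ 2)
    - 2 ^ (4 * n + 2) + (2::int) ^ (3 * n + 2)"
  shows "E \<ge> 0 \<and> (E = 0 \<longleftrightarrow> o_polynomial F)"
proof -
  note n1 = assms(1) and card = assms(2) and char = assms(3)
  define q where "q = int CARD('a)"
  have q2: "(2::int) ^ n = q" unfolding q_def card by simp
  have qpos: "q > 0" unfolding q_def by simp
  define T1 where "T1 = (\<Sum>v1\<in>UNIV. \<Sum>v2\<in>UNIV.
                 \<Sum>(x1,x2,x3)\<in>{(x1,x2,x3). v1 * x1 + v2 * x2 + (v1 + v2) * x3 = 0}.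
                   chi n (v1 * F x1 + v2 * F x2 + (v1 + v2) * F x3))"
  define S2 where "S2 = (\<Sum>v1\<in>UNIV. \<Sum>v2\<in>UNIV. walsh n F 0 v1 * walsh n F 0 v2 * walsh n F 0 (v1 + v2))"
  define S3 where "S3 = (\<Sum>v\<in>UNIV - {0}. (walsh n F 0 v) ^ 2)"
  define m where "m u c = cntM (\<lambda>x. F x + u * x) c" for u c
  define C3 where "C3 u = (\<Sum>c\<in>UNIV. (m u c) ^ 3)" for u
  define C2 where "C2 u = (\<Sum>c\<in>UNIV. (m u c) ^ 2)" for u
  define Af where "Af u = (\<Sum>c\<in>UNIV. m u c * (m u c - 1) * (m u c - 2))" for u
  have m0: "m 0 = cntM F" unfolding m_def by simp
  have E_eq: "E = q * T1 - S2 + 4 * q * S3 - 4 * q ^ 4 + 4 * q ^ 3"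
  proof -
    have "(2::int) ^ (n + 2) = 4 * q" using q2 by (simp add: power_add)
    moreover have "(2::int) ^ (4 * n + 2) = 4 * q ^ 4" using q2 by (simp add: power_add power_mult mult.commute)
    moreover have "(2::int) ^ (3 * n + 2) = 4 * q ^ 3" using q2 by (simp add: power_add power_mult mult.commute)
    ultimately show ?thesis unfolding E_def T1_def S2_def S3_def using q2 by simp
  qed
  have "q * T1 = (\<Sum>u\<in>UNIV. q ^ 2 * C3 u)"
    unfolding T1_def q_def C3_def m_def by (rule T1_eq[OF char card n1])
  then have hT1: "q * T1 = q ^ 2 * (\<Sum>u\<in>UNIV. C3 u)"
    by (simp only: sum_distrib_left)
  have hS2: "S2 = q ^ 2 * C3 0"
    unfolding S2_def q_def C3_def m0 by (rule S2_eq[OF char card n1])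
  have hS3: "S3 = q * C2 0 - q ^ 2"
    unfolding S3_def q_def C2_def m0 by (rule S3_eq[OF char card n1])
  have hC2: "(\<Sum>u\<in>UNIV. C2 u) = 2 * q ^ 2 - q"
    unfolding C2_def q_def m_def by (rule C2_total)
  have msum: "(\<Sum>c\<in>UNIV. m u c) = q" for u
    unfolding m_def q_def by (rule cnt_sum)
  have mnn: "m u c \<ge> 0" for u c unfolding m_def by (rule cnt_nonneg)
  have hC3: "C3 u = Af u + 3 * C2 u - 2 * q" for u
  proof -
    have "C3 u = (\<Sum>c\<in>UNIV. m u c * (m u c - 1) * (m u c - 2) + 3 * (m u c) ^ 2 - 2 * m u c)"
      unfolding C3_def by (intro sum.cong refl) (simp add: power2_eq_square power3_eq_cube algebra_simps)
    also have "\<dots> = Af u + 3 * C2 u - 2 * (\<Sum>c\<in>UNIV. m u c)"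
      unfolding Af_def C2_def by (simp add: sum.distrib sum_subtractf sum_distrib_left)
    finally show ?thesis using msum by simp
  qed
  have sumC3: "(\<Sum>u\<in>UNIV. C3 u) = (\<Sum>u\<in>UNIV. Af u) + 3 * (2 * q ^ 2 - q) - 2 * q * q"
  proof -
    have "(\<Sum>u\<in>UNIV. C3 u) = (\<Sum>u\<in>UNIV. Af u) + 3 * (\<Sum>u\<in>UNIV. C2 u) - (\<Sum>u\<in>(UNIV::'a set). 2 * q)"
      by (simp add: hC3 sum.distrib sum_subtractf sum_distrib_left)
    then show ?thesis using hC2 q_def by simp
  qed
  define P where "P = (\<Sum>u\<in>UNIV - {0}. Af u)"
  define Q where "Q = (\<Sum>c\<in>UNIV. (m 0 c) ^ 2 - m 0 c)"
  have hP: "P = (\<Sum>u\<in>UNIV. Af u) - Af 0" unfolding P_def by (simp add: sum_diff1)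
  have hQ: "Q = C2 0 - q" unfolding Q_def C2_def using msum[of 0] by (simp add: sum_subtractf)
  have Ef: "E = q ^ 2 * (P + Q)"
  proof -
    have "E = q ^ 2 * (\<Sum>u\<in>UNIV. C3 u) - q ^ 2 * C3 0 + 4 * q * (q * C2 0 - q ^ 2) - 4 * q ^ 4 + 4 * q ^ 3"
      using E_eq hT1 hS2 hS3 by simp
    then show ?thesis using sumC3 hC3[of 0] hP hQ by algebra
  qed
  have Afnn: "Af u \<ge> 0" for u unfolding Af_def by (intro sum_nonneg) (use f3_props mnn in blast)
  have Pnn: "P \<ge> 0" unfolding P_def by (intro sum_nonneg Afnn)
  have Qnn: "Q \<ge> 0" unfolding Q_def by (intro sum_nonneg) (use sq_props mnn in blast)
  have "E \<ge> 0" unfolding Ef using Pnn Qnn by simp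
  moreover have "E = 0 \<longleftrightarrow> o_polynomial F"
  proof -
    have "E = 0 \<longleftrightarrow> P = 0 \<and> Q = 0" unfolding Ef using Pnn Qnn qpos by auto
    also have "P = 0 \<longleftrightarrow> (\<forall>u. u \<noteq> 0 \<longrightarrow> (\<forall>c. m u c \<le> 2))"
    proof -
      have "P = 0 \<longleftrightarrow> (\<forall>u\<in>UNIV - {0}. Af u = 0)"
        unfolding P_def by (rule sum_nonneg_eq_0_iff) (simp_all add: Afnn)
      also have "\<dots> \<longleftrightarrow> (\<forall>u. u \<noteq> 0 \<longrightarrow> (\<forall>c. m u c \<le> 2))"
      proof -
        have "Af u = 0 \<longleftrightarrow> (\<forall>c. m u c \<le> 2)" for u
        proof -
          have "Af u = 0 \<longleftrightarrow> (\<forall>c\<in>UNIV. m u c * (m u c - 1) * (m u c - 2) = 0)"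
            unfolding Af_def by (rule sum_nonneg_eq_0_iff) (use f3_props mnn in auto)
          then show ?thesis using f3_props mnn by auto
        qed
        then show ?thesis by auto
      qed
      finally show ?thesis .
    qed
    also have "Q = 0 \<longleftrightarrow> (\<forall>c. m 0 c \<le> 1)"
    proof -
      have "Q = 0 \<longleftrightarrow> (\<forall>c\<in>UNIV. (m 0 c) ^ 2 - m 0 c = 0)"
        unfolding Q_def by (rule sum_nonneg_eq_0_iff) (use sq_props mnn in auto)
      then show ?thesis using sq_props mnn by auto
    qed
    also have "(\<forall>u. u \<noteq> 0 \<longrightarrow> (\<forall>c. m u c \<le> 2)) \<and> (\<forall>c. m 0 c \<le> 1) \<longleftrightarrow> o_polynomial F"
      using cond_iff[of F] unfolding m_def by auto
    finally show ?thesis .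
  qed
  ultimately show ?thesis by blast
qed

end
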